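(* Let PS1 and PS2 be pure strategies (as in the context) with $m_{PS1}$ finite, and suppose PS2 is complementary to PS1, i.e. $\Delta_{PS1}(X)<\Delta_{PS2}(X)$ for some $X\in\mathcal{S}_{\mathrm{non}}$. Then there exists a mixed strategy MS derived from PS1 and PS2 whose average expected hitting time satisfies $\bar m_{MS}<\bar m_{PS1}$, where $\bar m=\frac{1}{|\mathcal{S}|}\sum_{X\in\mathcal{S}}m(X)$.
   Context: A fitness function $f$ on a finite set is to be maximised. A metaheuristic generates populations $\Phi_0,\Phi_1,\dots$. Let $\mathcal{S}$ be the finite set of all populations, $\mathcal{S}_{\mathrm{opt}}$ those containing at least one optimal solution, $\mathcal{S}_{\mathrm{non}}=\mathcal{S}\setminus\mathcal{S}_{\mathrm{opt}}$. The sequence is a time-homogeneous Markov chain on $\mathcal{S}$ with transition probabilities $P(X,Y)=\Pr(\Phi_{t+1}=Y\mid\Phi_t=X)$, every state of $\mathcal{S}_{\mathrm{opt}}$ absorbing. The expected hitting time $m(X)\in[0,\infty]$ is the expected number of generations until first entering $\mathcal{S}_{\mathrm{opt}}$ from $\Phi_0=X$ ($m(X)=0$ on $\mathcal{S}_{\mathrm{opt}}$). A pure strategy is such a time-independent transition matrix. PS1, PS2 are pure strategies with transition matrices $P_1,P_2$ on the same $\mathcal{S}$ (with $\mathcal{S}_{\mathrm{opt}}$ absorbing), expected hitting times $m_{PS1},m_{PS2}$. A mixed strategy MS derived from PS1 and PS2 assigns to each $X\in\mathcal{S}$ probabilities $P_X(PS1)\in[0,1]$, $P_X(PS2)=1-P_X(PS1)$,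 and has transition matrix $P_{MS}(X,Y)=P_X(PS1)P_1(X,Y)+P_X(PS2)P_2(X,Y)$, with expected hitting time $m_{MS}$. With $d(X)=m_{PS1}(X)$, for $X\in\mathcal{S}_{\mathrm{non}}$: $\Delta_{PS1}(X)=d(X)-\sum_{Y\in\mathcal{S}_{\mathrm{non}}}P_1(X,Y)d(Y)$, $\Delta_{PS2}(X)=d(X)-\sum_{Y\in\mathcal{S}_{\mathrm{non}}}P_2(X,Y)d(Y)$. *)

theory Defs
  imports "HOL-Analysis.Analysis"
begin

text \<open>A population space: a finite set S of populations, with the subset Sopt of
populations containing an optimal solution. A pure strategy is a time-homogeneous
transition matrix P on S (stochastic rows, every state of Sopt absorbing).\<close>

definition transition_matrix :: "'a set \<Rightarrow> 'a set \<Rightarrow> ('a \<Rightarrow> 'a \<Rightarrow> real) \<Rightarrow> bool" where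
  "transition_matrix S Sopt P \<longleftrightarrow>
     (\<forall>X\<in>S. \<forall>Y\<in>S. 0 \<le> P X Y) \<and>
     (\<forall>X\<in>S. (\<Sum>Y\<in>S. P X Y) = 1) \<and>
     (\<forall>X\<in>Sopt. P X X = 1)"

text \<open>survival S Sopt P t X = Pr(Phi_0, ..., Phi_t all lie in S - Sopt | Phi_0 = X),
i.e. the probability that the hitting time of Sopt exceeds t.\<close>

fun survival :: "'a set \<Rightarrow> 'a set \<Rightarrow> ('a \<Rightarrow> 'a \<Rightarrow> real) \<Rightarrow> nat \<Rightarrow> 'a \<Rightarrow> real" where
  "survival S Sopt P 0 X = (if X \<in> S - Sopt then 1 else 0)"
| "survival S Sopt P (Suc t) X =
     (if X \<in> S - Sopt then (\<Sum>Y\<in>S - Sopt. P X Y * survival S Sopt P t Y) else 0)"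

text \<open>Expected hitting time of Sopt, in [0, \<infinity>], via E[T] = sum over t of Pr(T > t).\<close>

definition hitting_time :: "'a set \<Rightarrow> 'a set \<Rightarrow> ('a \<Rightarrow> 'a \<Rightarrow> real) \<Rightarrow> 'a \<Rightarrow> ennreal" where
  "hitting_time S Sopt P X = (\<Sum>t. ennreal (survival S Sopt P t X))"

definition avg_hitting_time :: "'a set \<Rightarrow> 'a set \<Rightarrow> ('a \<Rightarrow> 'a \<Rightarrow> real) \<Rightarrow> ennreal" where
  "avg_hitting_time S Sopt P = (\<Sum>X\<in>S. hitting_time S Sopt P X) / of_nat (card S)"

definition Delta :: "'a set \<Rightarrow> 'a set \<Rightarrow> ('a \<Rightarrow> 'a \<Rightarrow> real) \<Rightarrow> ('a \<Rightarrow> 'a \<Rightarrow> real) \<Rightarrow> 'a \<Rightarrow> real" where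
  "Delta S Sopt P1 Q X =
     enn2real (hitting_time S Sopt P1 X)
     - (\<Sum>Y\<in>S - Sopt. Q X Y * enn2real (hitting_time S Sopt P1 Y))"

end

theory Submission
  imports Defs
begin

lemma survival_nonneg:
  assumes "\<forall>X\<in>S. \<forall>Y\<in>S. 0 \<le> P X Y" "Sopt \<subseteq> S"
  shows "0 \<le> survival S Sopt P t X"
  using assms by (induction t arbitrary: X) (auto intro!: sum_nonneg mult_nonneg_nonneg)

lemma survival_opt: "X \<notin> S - Sopt \<Longrightarrow> survival S Sopt P t X = 0"
  by (cases t) auto

lemma hitting_opt: "X \<notin> S - Sopt \<Longrightarrow> hitting_time S Sopt P X = 0"
  unfolding hitting_time_def by (simp add: survival_opt)

lemma hitting_eq:
  assumes "finite S" "\<forall>X\<in>S. \<forall>Y\<in>S. 0 \<le> P X Y" "Sopt \<subseteq> S" "X \<in> S - Sopt"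
  shows "hitting_time S Sopt P X
       = 1 + (\<Sum>Y\<in>S - Sopt. ennreal (P X Y) * hitting_time S Sopt P Y)"
proof -
  have nn: "\<And>t Y. 0 \<le> survival S Sopt P t Y" by (rule survival_nonneg[OF assms(2,3)])
  have A: "hitting_time S Sopt P X = (\<Sum>t. ennreal (survival S Sopt P (t + 1) X))
        + (\<Sum>j<1. ennreal (survival S Sopt P j X))"
    unfolding hitting_time_def by (rule suminf_offset) (rule summableI)
  have B: "(\<Sum>j<1. ennreal (survival S Sopt P j X)) = 1" using assms(4) by simp
  have C: "ennreal (survival S Sopt P (t + 1) X)
      = (\<Sum>Y\<in>S - Sopt. ennreal (P X Y) * ennreal (survival S Sopt P t Y))" for t
  proof -
    have "ennreal (survival S Sopt P (t + 1) X)
        = ennreal (\<Sum>Y\<in>S - Sopt. P X Y * survival S Sopt P t Y)" using assms(4) by simp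
    also have "\<dots> = (\<Sum>Y\<in>S - Sopt. ennreal (P X Y * survival S Sopt P t Y))"
      using assms nn by (intro sum_ennreal[symmetric] mult_nonneg_nonneg) auto
    also have "\<dots> = (\<Sum>Y\<in>S - Sopt. ennreal (P X Y) * ennreal (survival S Sopt P t Y))"
      using assms nn by (intro sum.cong refl ennreal_mult) auto
    finally show ?thesis .
  qed
  have D: "(\<Sum>t. \<Sum>Y\<in>S - Sopt. ennreal (P X Y) * ennreal (survival S Sopt P t Y))
     = (\<Sum>Y\<in>S - Sopt. \<Sum>t. ennreal (P X Y) * ennreal (survival S Sopt P t Y))"
    by (rule suminf_sum) (rule summableI)
  have E: "(\<Sum>t. ennreal (P X Y) * ennreal (survival S Sopt P t Y)) = ennreal (P X Y) * hitting_time S Sopt P Y" for Y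
    unfolding hitting_time_def by (rule ennreal_suminf_cmult)
  show ?thesis
    unfolding A B C D E by (rule add.commute)
qed

lemma partial_bound:
  assumes "\<forall>X\<in>S. \<forall>Y\<in>S. 0 \<le> Q X Y" "Sopt \<subseteq> S" "finite S"
    and "\<forall>X\<in>S - Sopt. 0 \<le> d X"
    and "\<forall>X\<in>S - Sopt. 1 + (\<Sum>Y\<in>S - Sopt. Q X Y * d Y) \<le> d X"
  shows "\<forall>X\<in>S - Sopt. (\<Sum>t<n. survival S Sopt Q t X) \<le> 1 + (\<Sum>Y\<in>S - Sopt. Q X Y * d Y)"
proof (induction n)
  case 0
  show ?case
  proof
    fix X assume X: "X \<in> S - Sopt"
    have "0 \<le> (\<Sum>Y\<in>S - Sopt. Q X Y * d Y)"
      using X assms(1,4) by (intro sum_nonneg mult_nonneg_nonneg) auto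
    then show "(\<Sum>t<0. survival S Sopt Q t X) \<le> 1 + (\<Sum>Y\<in>S - Sopt. Q X Y * d Y)" by simp
  qed
next
  case (Suc n)
  show ?case
  proof
    fix X assume X: "X \<in> S - Sopt"
    have "(\<Sum>t<Suc n. survival S Sopt Q t X)
       = survival S Sopt Q 0 X + (\<Sum>t<n. survival S Sopt Q (Suc t) X)"
      by (rule sum.lessThan_Suc_shift)
    also have "\<dots> = 1 + (\<Sum>t<n. \<Sum>Y\<in>S - Sopt. Q X Y * survival S Sopt Q t Y)"
      using X by (simp del: sum.lessThan_Suc)
    also have "\<dots> = 1 + (\<Sum>Y\<in>S - Sopt. Q X Y * (\<Sum>t<n. survival S Sopt Q t Y))"
    proof -
      have "(\<Sum>t<n. \<Sum>Y\<in>S - Sopt. Q X Y * survival S Sopt Q t Y)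
          = (\<Sum>Y\<in>S - Sopt. \<Sum>t<n. Q X Y * survival S Sopt Q t Y)" by (rule sum.swap)
      also have "\<dots> = (\<Sum>Y\<in>S - Sopt. Q X Y * (\<Sum>t<n. survival S Sopt Q t Y))"
        by (simp only: sum_distrib_left)
      finally show ?thesis by (simp only:)
    qed
    also have "\<dots> \<le> 1 + (\<Sum>Y\<in>S - Sopt. Q X Y * d Y)"
    proof -
      have "(\<Sum>Y\<in>S - Sopt. Q X Y * (\<Sum>t<n. survival S Sopt Q t Y)) \<le> (\<Sum>Y\<in>S - Sopt. Q X Y * d Y)"
      proof (rule sum_mono)
        fix Y assume Y: "Y \<in> S - Sopt"
        have "(\<Sum>t<n. survival S Sopt Q t Y) \<le> d Y"
          using order_trans[OF Suc.IH[rule_format, OF Y] assms(5)[rule_format, OF Y]] .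
        then show "Q X Y * (\<Sum>t<n. survival S Sopt Q t Y) \<le> Q X Y * d Y"
          using X Y assms(1) by (intro mult_left_mono) auto
      qed
      then show ?thesis by simp
    qed
    finally show "(\<Sum>t<Suc n. survival S Sopt Q t X) \<le> 1 + (\<Sum>Y\<in>S - Sopt. Q X Y * d Y)" .
  qed
qed

theorem corollary4:
  fixes S Sopt :: "'a set" and P1 P2 :: "'a \<Rightarrow> 'a \<Rightarrow> real"
  assumes "finite S" and "Sopt \<subseteq> S"
    and "transition_matrix S Sopt P1" and "transition_matrix S Sopt P2"
    and "\<forall>X\<in>S. hitting_time S Sopt P1 X < \<infinity>"
    and "\<exists>X\<in>S - Sopt. Delta S Sopt P1 P1 X < Delta S Sopt P1 P2 X"
  shows "\<exists>p :: 'a \<Rightarrow> real. (\<forall>X\<in>S. 0 \<le> p X \<and> p X \<le> 1) \<and>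
           avg_hitting_time S Sopt (\<lambda>X Y. p X * P1 X Y + (1 - p X) * P2 X Y)
             < avg_hitting_time S Sopt P1"
proof -
  obtain X0 where X0: "X0 \<in> S - Sopt" "Delta S Sopt P1 P1 X0 < Delta S Sopt P1 P2 X0"
    using assms(6) by blast
  define d where "d X = enn2real (hitting_time S Sopt P1 X)" for X
  have P1nn: "\<forall>X\<in>S. \<forall>Y\<in>S. 0 \<le> P1 X Y" and P2nn: "\<forall>X\<in>S. \<forall>Y\<in>S. 0 \<le> P2 X Y"
    using assms(3,4) unfolding transition_matrix_def by auto
  have hd: "hitting_time S Sopt P1 X = ennreal (d X)" if "X \<in> S" for X
    using assms(5) that unfolding d_def by (simp add: top_ennreal.rep_eq infinity_ennreal_def)
  have dnn: "0 \<le> d X" for X unfolding d_def by simp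
  have deq: "d X = 1 + (\<Sum>Y\<in>S - Sopt. P1 X Y * d Y)" if X: "X \<in> S - Sopt" for X
  proof -
    have "ennreal (d X) = 1 + (\<Sum>Y\<in>S - Sopt. ennreal (P1 X Y) * ennreal (d Y))"
      using hitting_eq[OF assms(1) P1nn assms(2) X] hd X by (simp add: hd)
    also have "\<dots> = 1 + (\<Sum>Y\<in>S - Sopt. ennreal (P1 X Y * d Y))"
      using X P1nn dnn by (auto intro!: sum.cong simp: ennreal_mult)
    also have "\<dots> = 1 + ennreal (\<Sum>Y\<in>S - Sopt. P1 X Y * d Y)"
      using X P1nn dnn by (subst sum_ennreal) (auto intro!: mult_nonneg_nonneg)
    also have "\<dots> = ennreal (1 + (\<Sum>Y\<in>S - Sopt. P1 X Y * d Y))"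
      using X P1nn dnn by (subst ennreal_plus) (auto intro!: sum_nonneg mult_nonneg_nonneg)
    finally show ?thesis using dnn X P1nn
      by (subst (asm) ennreal_inj) (auto intro!: add_nonneg_nonneg sum_nonneg mult_nonneg_nonneg)
  qed
  define p where "p X = (if X = X0 then 0 else 1::real)" for X
  define Q where "Q X Y = p X * P1 X Y + (1 - p X) * P2 X Y" for X Y
  have Qnn: "\<forall>X\<in>S. \<forall>Y\<in>S. 0 \<le> Q X Y" using P1nn P2nn by (auto simp: Q_def p_def)
  define e where "e X = 1 + (\<Sum>Y\<in>S - Sopt. Q X Y * d Y)" for X
  have lt0: "(\<Sum>Y\<in>S - Sopt. P2 X0 Y * d Y) < (\<Sum>Y\<in>S - Sopt. P1 X0 Y * d Y)"
    using X0(2) unfolding Delta_def d_def by simp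
  have ed: "e X \<le> d X" if "X \<in> S - Sopt" for X
    using deq[OF that] lt0 by (cases "X = X0") (auto simp: e_def Q_def p_def)
  have ed0: "e X0 < d X0"
    using deq[OF X0(1)] lt0 by (auto simp: e_def Q_def p_def)
  have pb: "\<forall>X\<in>S - Sopt. (\<Sum>t<n. survival S Sopt Q t X) \<le> e X" for n
    using partial_bound[OF Qnn assms(2,1)] ed dnn unfolding e_def by blast
  define e' where "e' X = (if X \<in> S - Sopt then e X else 0)" for X
  have e'nn: "0 \<le> e' X" for X
    unfolding e'_def e_def using Qnn dnn
    by (auto intro!: add_nonneg_nonneg sum_nonneg mult_nonneg_nonneg)
  have hQ: "hitting_time S Sopt Q X \<le> ennreal (e' X)" if "X \<in> S" for X
  proof (cases "X \<in> S - Sopt")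
    case True
    have sn: "\<And>t. 0 \<le> survival S Sopt Q t X" using survival_nonneg[OF Qnn assms(2)] by blast
    show ?thesis unfolding hitting_time_def
    proof (rule suminf_le_const[OF summableI])
      fix n
      have "(\<Sum>t<n. ennreal (survival S Sopt Q t X)) = ennreal (\<Sum>t<n. survival S Sopt Q t X)"
        using sn by simp
      also have "\<dots> \<le> ennreal (e' X)" using pb True by (simp add: e'_def ennreal_leI)
      finally show "(\<Sum>t<n. ennreal (survival S Sopt Q t X)) \<le> ennreal (e' X)" .
    qed
  next
    case False then show ?thesis by (simp add: hitting_opt)
  qed
  have sle: "(\<Sum>X\<in>S. hitting_time S Sopt Q X) \<le> ennreal (\<Sum>X\<in>S. e' X)"
    using sum_mono[of S "hitting_time S Sopt Q" "\<lambda>X. ennreal (e' X)"] hQ e'nn by simp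
  have sreal: "(\<Sum>X\<in>S. e' X) < (\<Sum>X\<in>S. d X)"
  proof (rule sum_strict_mono_ex1[OF assms(1)])
    show "\<forall>x\<in>S. e' x \<le> d x" using ed dnn by (auto simp: e'_def)
    show "\<exists>a\<in>S. e' a < d a" using ed0 X0(1) by (auto simp: e'_def)
  qed
  have sP1: "(\<Sum>X\<in>S. hitting_time S Sopt P1 X) = ennreal (\<Sum>X\<in>S. d X)"
    using hd dnn by simp
  have cpos: "0 < real (card S)" using X0(1) assms(1) card_gt_0_iff by auto
  have "avg_hitting_time S Sopt Q \<le> ennreal (\<Sum>X\<in>S. e' X) / of_nat (card S)"
    unfolding avg_hitting_time_def by (rule divide_right_mono_ennreal[OF sle])
  also have "\<dots> = ennreal ((\<Sum>X\<in>S. e' X) / real (card S))"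
    using e'nn cpos by (simp add: ennreal_of_nat_eq_real_of_nat divide_ennreal sum_nonneg)
  also have "\<dots> < ennreal ((\<Sum>X\<in>S. d X) / real (card S))"
    using sreal cpos e'nn by (subst ennreal_less_iff) (auto intro!: divide_nonneg_nonneg sum_nonneg divide_strict_right_mono)
  also have "\<dots> = avg_hitting_time S Sopt P1"
    unfolding avg_hitting_time_def sP1
    using dnn cpos by (simp add: ennreal_of_nat_eq_real_of_nat divide_ennreal sum_nonneg)
  finally show ?thesis
    by (intro exI[of _ p]) (auto simp: p_def Q_def[abs_def])
qed

end
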